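(* For a threshold graph $G$ with $n$ vertices, the matching number (maximum number of edges in a matching) satisfies $$\nu(G)=\left\lfloor\frac{n-h(\mathrm{seq}(G))}{2}\right\rfloor.$$
   Context: A threshold graph on $n\ge1$ vertices is built from a base vertex $v_0$ by successively adding $v_1,\dots,v_{n-1}$, each either isolated (adjacent to no earlier vertex) or dominating (adjacent to all earlier vertices); its creation sequence $\mathrm{seq}(G)=s_1\cdots s_{n-1}$ has $s_i=1$ if $v_i$ is dominating and $s_i=0$ otherwise. For a binary string $s=s_1\cdots s_m$ and $0\le k\le m$, the $k$-th tail is $s_{m-k+1}\cdots s_m$ (empty for $k=0$); $z_k(s)$, $u_k(s)$ are the numbers of zeros and ones in it, and $h(s)=\max_{0\le k\le m}\{z_k(s)-u_k(s)\}$. *)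

theory Defs
  imports Main
begin

(* A creation sequence s = s_1 ... s_m is a bool list (True = 1 = dominating,
   False = 0 = isolated); s_i is  s ! (i - 1).  The threshold graph built from it
   has vertex set {0..<m+1} (vertex i is v_i), and v_i, v_j with i < j are adjacent
   iff v_j was added as a dominating vertex, i.e. s_j = 1. *)

definition thr_vertices :: "bool list \<Rightarrow> nat set" where
  "thr_vertices s = {0..<length s + 1}"

definition thr_adj :: "bool list \<Rightarrow> nat \<Rightarrow> nat \<Rightarrow> bool" where
  "thr_adj s i j \<longleftrightarrow> i \<in> thr_vertices s \<and> j \<in> thr_vertices s \<and> i \<noteq> j
      \<and> s ! (max i j - 1)"

definition thr_edges :: "bool list \<Rightarrow> nat set set" where
  "thr_edges s = {{i, j} | i j. thr_adj s i j}"

definition is_matching :: "'a set set \<Rightarrow> 'a set set \<Rightarrow> bool" where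
  "is_matching E M \<longleftrightarrow> M \<subseteq> E \<and> (\<forall>e\<in>M. \<forall>e'\<in>M. e \<noteq> e' \<longrightarrow> e \<inter> e' = {})"

definition matching_number :: "'a set set \<Rightarrow> nat" where
  "matching_number E = Max {card M | M. is_matching E M}"

definition tail :: "nat \<Rightarrow> bool list \<Rightarrow> bool list" where
  "tail k s = drop (length s - k) s"

definition zeros :: "bool list \<Rightarrow> nat" where
  "zeros s = length (filter (\<lambda>b. \<not> b) s)"

definition ones :: "bool list \<Rightarrow> nat" where
  "ones s = length (filter (\<lambda>b. b) s)"

definition h :: "bool list \<Rightarrow> int" where
  "h s = Max {int (zeros (tail k s)) - int (ones (tail k s)) | k. k \<le> length s}"

end

theory Submission
  imports Defs
begin

lemma mn_props:
  assumes "finite E"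
  shows "\<And>M. is_matching E M \<Longrightarrow> card M \<le> matching_number E"
    and "\<exists>M. is_matching E M \<and> card M = matching_number E"
proof -
  let ?S = "{card M | M. is_matching E M}"
  have fin: "finite ?S"
  proof (rule finite_subset[of _ "{0..card E}"])
    show "?S \<subseteq> {0..card E}"
      using assms by (auto simp: is_matching_def intro: card_mono)
  qed simp
  have ne: "?S \<noteq> {}" using is_matching_def by fastforce
  show "\<And>M. is_matching E M \<Longrightarrow> card M \<le> matching_number E"
    unfolding matching_number_def using fin by (auto intro: Max_ge)
  have "matching_number E \<in> ?S" unfolding matching_number_def using fin ne by (rule Max_in)
  then show "\<exists>M. is_matching E M \<and> card M = matching_number E" by auto
qed

lemma matching_card:
  assumes "is_matching E M" "\<forall>e\<in>E. card e = 2 \<and> e \<subseteq> V" "finite V"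
  shows "card (\<Union>M) = 2 * card M" "2 * card M \<le> card V"
proof -
  have sub: "M \<subseteq> E" using assms(1) by (simp add: is_matching_def)
  have fe: "\<And>e. e \<in> M \<Longrightarrow> finite e" using sub assms(2,3) finite_subset by blast
  have pw: "pairwise disjnt M" using assms(1)
    by (auto simp: is_matching_def pairwise_def disjnt_def)
  have "card (\<Union>M) = sum card M" by (rule card_Union_disjoint[OF pw fe])
  also have "\<dots> = sum (\<lambda>_. 2) M" using sub assms(2) by (intro sum.cong) auto
  also have "\<dots> = 2 * card M" by simp
  finally show 1: "card (\<Union>M) = 2 * card M" .
  have "\<Union>M \<subseteq> V" using sub assms(2) by blast
  then have "card (\<Union>M) \<le> card V" using assms(3) by (rule card_mono[rotated])
  then show "2 * card M \<le> card V" using 1 by simp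
qed

lemma thr_edges_props:
  "\<forall>e\<in>thr_edges s. card e = 2 \<and> e \<subseteq> {0..<length s + 1}"
  by (auto simp: thr_edges_def thr_adj_def thr_vertices_def)

lemma thr_edges_finite: "finite (thr_edges s)"
proof (rule finite_subset[of _ "Pow {0..<length s + 1}"])
  show "thr_edges s \<subseteq> Pow {0..<length s + 1}" using thr_edges_props by blast
qed simp

lemma thr_adj_snoc:
  "thr_adj (t @ [b]) i j \<longleftrightarrow> thr_adj t i j \<or>
     (b \<and> ((i = length t + 1 \<and> j \<le> length t) \<or> (j = length t + 1 \<and> i \<le> length t)))"
  by (auto simp: thr_adj_def thr_vertices_def nth_append max_def)

lemma thr_edges_False: "thr_edges (t @ [False]) = thr_edges t"
  by (simp add: thr_edges_def thr_adj_snoc)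

lemma thr_edges_True:
  "thr_edges (t @ [True]) = thr_edges t \<union> {{i, length t + 1} | i. i \<le> length t}"
  unfolding thr_edges_def thr_adj_snoc by (auto simp: insert_commute)

lemma thr_edges_Nil: "thr_edges [] = {}"
  by (auto simp: thr_edges_def thr_adj_def thr_vertices_def)

definition d :: "bool list \<Rightarrow> int" where
  "d l = int (zeros l) - int (ones l)"

lemma h_props:
  "\<exists>k\<le>length s. d (tail k s) = h s" "\<And>k. k \<le> length s \<Longrightarrow> d (tail k s) \<le> h s"
proof -
  have eq: "{int (zeros (tail k s)) - int (ones (tail k s)) | k. k \<le> length s}
      = (\<lambda>k. d (tail k s)) ` {0..length s}" by (auto simp: d_def)
  have "h s \<in> (\<lambda>k. d (tail k s)) ` {0..length s}"
    unfolding h_def eq by (rule Max_in) auto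
  then show "\<exists>k\<le>length s. d (tail k s) = h s" by auto
  show "\<And>k. k \<le> length s \<Longrightarrow> d (tail k s) \<le> h s"
    unfolding h_def eq by (rule Max_ge) auto
qed

lemma h_eqI:
  assumes "k0 \<le> length s" "d (tail k0 s) = x" "\<And>k. k \<le> length s \<Longrightarrow> d (tail k s) \<le> x"
  shows "h s = x"
  using h_props(1)[of s] h_props(2)[where s=s] assms by (metis order.antisym)

lemma h_nonneg: "h s \<ge> 0"
proof -
  have "d (tail 0 s) \<le> h s" by (rule h_props(2)) simp
  then show ?thesis by (simp add: tail_def d_def zeros_def ones_def)
qed

lemma tail_snoc: "k \<le> length t \<Longrightarrow> tail (Suc k) (t @ [b]) = tail k t @ [b]"
  by (simp add: tail_def)

lemma tail_0: "tail 0 s = []" by (simp add: tail_def)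

lemma d_snoc: "d (l @ [b]) = d l + (if b then -1 else 1)"
  by (simp add: d_def zeros_def ones_def)

lemma h_snoc: "h (t @ [b]) = max 0 (h t + (if b then -1 else 1))"
proof -
  obtain k0 where k0: "k0 \<le> length t" "d (tail k0 t) = h t" using h_props(1) by blast
  have ub: "d (tail k (t @ [b])) \<le> max 0 (h t + (if b then -1 else 1))"
    if "k \<le> length (t @ [b])" for k
  proof (cases k)
    case 0 then show ?thesis by (simp add: tail_0 d_def zeros_def ones_def)
  next
    case (Suc j)
    then have "j \<le> length t" using that by simp
    then show ?thesis using Suc h_props(2)[of j t] by (simp add: tail_snoc d_snoc)
  qed
  show ?thesis
  proof (cases "h t + (if b then -1 else 1) \<ge> 0")
    case True
    show ?thesis
      by (rule h_eqI[of "Suc k0"]) (use k0 True ub in \<open>simp_all add: tail_snoc d_snoc\<close>)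
  next
    case False
    show ?thesis
      by (rule h_eqI[of 0]) (use False ub in \<open>simp_all add: tail_0 d_def zeros_def ones_def\<close>)
  qed
qed

lemma h_Nil: "h [] = 0"
  by (rule h_eqI[of 0]) (simp_all add: tail_def d_def zeros_def ones_def)

abbreviation nu where "nu s \<equiv> matching_number (thr_edges s)"

lemma nu_Nil: "nu [] = 0"
proof -
  obtain M :: "nat set set" where "is_matching {} M" "card M = matching_number ({}::nat set set)"
    using mn_props(2)[of "{}::nat set set"] by auto
  then show ?thesis by (simp add: thr_edges_Nil is_matching_def)
qed

lemma nu_True:
  fixes t :: "bool list"
  defines "k \<equiv> length t"
  shows "nu t \<le> nu (t @ [True])" "nu (t @ [True]) \<le> nu t + 1"
    "2 * nu (t @ [True]) \<le> k + 2" "2 * nu t < k + 1 \<Longrightarrow> nu t + 1 \<le> nu (t @ [True])"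
proof -
  let ?E = "thr_edges t" and ?E' = "thr_edges (t @ [True])"
  have fE: "finite ?E" "finite ?E'" by (rule thr_edges_finite)+
  have EE': "?E \<subseteq> ?E'" using thr_edges_True by blast
  obtain M where M: "is_matching ?E M" "card M = nu t" using mn_props(2)[OF fE(1)] by blast
  have M': "is_matching ?E' M" using M(1) EE' by (auto simp: is_matching_def)
  show "nu t \<le> nu (t @ [True])" using mn_props(1)[OF fE(2) M'] M(2) by simp
  obtain M2 where M2: "is_matching ?E' M2" "card M2 = nu (t @ [True])"
    using mn_props(2)[OF fE(2)] by blast
  show "2 * nu (t @ [True]) \<le> k + 2"
    using matching_card(2)[OF M2(1) thr_edges_props] M2(2) by (simp add: k_def)
  have fM2: "finite M2" using M2(1) fE(2) finite_subset by (auto simp: is_matching_def)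
  let ?A = "{e \<in> M2. Suc k \<in> e}" and ?B = "{e \<in> M2. Suc k \<notin> e}"
  have "card ?A \<le> Suc 0"
    using fM2 M2(1) by (subst card_le_Suc0_iff_eq) (auto simp: is_matching_def)
  moreover have "is_matching ?E ?B"
  proof -
    have "?B \<subseteq> ?E" using M2(1) by (auto simp: is_matching_def thr_edges_True k_def)
    then show ?thesis using M2(1) by (auto simp: is_matching_def)
  qed
  then have "card ?B \<le> nu t" using mn_props(1)[OF fE(1)] by blast
  moreover have "card M2 = card ?A + card ?B"
    using fM2 by (subst card_Un_disjoint[symmetric]) (auto intro: arg_cong[where f=card])
  ultimately show "nu (t @ [True]) \<le> nu t + 1" using M2(2) by simp
  assume lt: "2 * nu t < k + 1"
  have cu: "card (\<Union>M) = 2 * nu t" using matching_card(1)[OF M(1) thr_edges_props] M(2) by simp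
  have "\<Union>M \<subseteq> {0..<k+1}" using M(1) thr_edges_props[of t] by (auto simp: is_matching_def k_def)
  moreover have "\<Union>M \<noteq> {0..<k+1}" using cu lt by auto
  ultimately have "\<exists>v. v < k + 1 \<and> v \<notin> \<Union>M" by auto
  then obtain v where v: "v < k + 1" "v \<notin> \<Union>M" by blast
  have nk: "\<And>e. e \<in> M \<Longrightarrow> Suc k \<notin> e"
    using M(1) thr_edges_props[of t] by (fastforce simp: is_matching_def k_def)
  let ?M = "insert {v, Suc k} M"
  have ne: "{v, Suc k} \<notin> M" using nk by blast
  have "is_matching ?E' ?M"
  proof -
    have "{v, Suc k} \<in> ?E'" using v by (auto simp: thr_edges_True k_def)
    moreover have "\<And>e. e \<in> M \<Longrightarrow> {v, Suc k} \<inter> e = {}" using v nk by blast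
    ultimately show ?thesis using M' by (auto simp: is_matching_def)
  qed
  then have "card ?M \<le> nu (t @ [True])" using mn_props(1)[OF fE(2)] by blast
  moreover have "finite M" using M(1) fE(1) finite_subset by (auto simp: is_matching_def)
  ultimately show "nu t + 1 \<le> nu (t @ [True])" using ne M(2) by simp
qed

theorem mainTheorem6:
  fixes s :: "bool list" and n :: nat
  assumes "n = length s + 1"
  shows "int (matching_number (thr_edges s)) = (int n - h s) div 2"
  unfolding assms
proof (induction s rule: rev_induct)
  case Nil
  then show ?case by (simp add: nu_Nil h_Nil)
next
  case (snoc b t)
  show ?case
  proof (cases b)
    case False
    then show ?thesis using snoc h_nonneg[of t]
      by (simp add: thr_edges_False h_snoc)
  next
    case True
    note f = nu_True[of t]
    have hn: "h t \<ge> 0" by (rule h_nonneg)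
    show ?thesis using True snoc f hn unfolding h_snoc by (simp add: max_def) linarith
  qed
qed

end
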